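(* Let $\mathfrak F$ be a semiclosed generalized flag in $V$. Then every nonzero proper closed subspace of $V$ which is stable under $\mathrm{St}_{\mathfrak F}$ is both a union of members of $\mathfrak F$ and an intersection of members of $\mathfrak F$.
   Context: $V,V_*$ are countable-dimensional complex vector spaces with a nondegenerate pairing $\langle\cdot,\cdot\rangle$; $\mathfrak{gl}(V,V_* )=V\otimes V_*$ acts on $V$ by $(v\otimes w)u=\langle u,w\rangle v$. For a subspace $F$ of $V$ (resp. $V_*$), $F^\perp$ is its orthogonal in $V_*$ (resp. $V$); $F$ is closed if $F=F^{\perp\perp}$, and $\overline F:=F^{\perp\perp}$. A chain is a totally ordered (by inclusion) set of subspaces. In a chain, $C'\subsetneq C''$ form an immediate predecessor–successor pair ("pair") if no member lies strictly between them. A generalized flag is a chain $\mathfrak F$ such that (i) every member belongs to some pair of $\mathfrak F$, and (ii) for each nonzero $v\in V$ there is a pair $F'\subset F''$ in $\mathfrak F$ with $v\in F''\setminus F'$. Pairs are indexed by a set $A$: $F'_\alpha\subset F''_\alpha$. $\mathfrak F$ is semiclosed if $\overline{F'_\alpha}\in\{F'_\alpha,F''_\alpha\}$ for all $\alpha\in A$. $\mathrm{St}_{\mathfrak F}$ denotes the stabilizer of $\mathfrak F$ in $\mathfrak{gl}(V,V_* )$ (elements mapping each member into itself). *)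

theory Defs
  imports "HOL-Analysis.Analysis"
begin

text \<open>Setting: V is the type 'v with complex scalar multiplication sV, V_* is the type 'w
  with scalar multiplication sW, and pr is the pairing V \<times> V_* \<rightarrow> \<complex>.\<close>

definition countable_dim :: "(complex \<Rightarrow> 'a::ab_group_add \<Rightarrow> 'a) \<Rightarrow> bool" where
  "countable_dim s \<longleftrightarrow>
     (\<exists>B. countable B \<and> \<not> module.dependent s B \<and> module.span s B = UNIV)"

definition bilinear_pairing ::
  "(complex \<Rightarrow> 'v::ab_group_add \<Rightarrow> 'v) \<Rightarrow> (complex \<Rightarrow> 'w::ab_group_add \<Rightarrow> 'w)
   \<Rightarrow> ('v \<Rightarrow> 'w \<Rightarrow> complex) \<Rightarrow> bool" where
  "bilinear_pairing sV sW pr \<longleftrightarrow>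
     (\<forall>u u' w. pr (u + u') w = pr u w + pr u' w) \<and>
     (\<forall>a u w. pr (sV a u) w = a * pr u w) \<and>
     (\<forall>u w w'. pr u (w + w') = pr u w + pr u w') \<and>
     (\<forall>a u w. pr u (sW a w) = a * pr u w)"

definition nondegenerate :: "('v::zero \<Rightarrow> 'w::zero \<Rightarrow> complex) \<Rightarrow> bool" where
  "nondegenerate pr \<longleftrightarrow>
     (\<forall>u. (\<forall>w. pr u w = 0) \<longrightarrow> u = 0) \<and> (\<forall>w. (\<forall>u. pr u w = 0) \<longrightarrow> w = 0)"

definition perpV :: "('v \<Rightarrow> 'w \<Rightarrow> complex) \<Rightarrow> 'v set \<Rightarrow> 'w set" where
  "perpV pr F = {w. \<forall>v\<in>F. pr v w = 0}"

definition perpW :: "('v \<Rightarrow> 'w \<Rightarrow> complex) \<Rightarrow> 'w set \<Rightarrow> 'v set" where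
  "perpW pr G = {v. \<forall>w\<in>G. pr v w = 0}"

definition closureV :: "('v \<Rightarrow> 'w \<Rightarrow> complex) \<Rightarrow> 'v set \<Rightarrow> 'v set" where
  "closureV pr F = perpW pr (perpV pr F)"

definition closedV :: "('v \<Rightarrow> 'w \<Rightarrow> complex) \<Rightarrow> 'v set \<Rightarrow> bool" where
  "closedV pr F \<longleftrightarrow> F = closureV pr F"

text \<open>gl(V,V_*) = V \<otimes> V_*, as the set of operators u \<mapsto> \<Sum> \<langle>u,w_i\<rangle> v_i (finite sums).\<close>
definition gl :: "(complex \<Rightarrow> 'v::ab_group_add \<Rightarrow> 'v) \<Rightarrow> ('v \<Rightarrow> 'w \<Rightarrow> complex)
   \<Rightarrow> ('v \<Rightarrow> 'v) set" where
  "gl sV pr = {\<phi>. \<exists>xs :: ('v \<times> 'w) list.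
                    \<phi> = (\<lambda>u. sum_list (map (\<lambda>(v, w). sV (pr u w) v) xs))}"

definition is_chain :: "(complex \<Rightarrow> 'v::ab_group_add \<Rightarrow> 'v) \<Rightarrow> 'v set set \<Rightarrow> bool" where
  "is_chain sV \<FF> \<longleftrightarrow> (\<forall>F\<in>\<FF>. module.subspace sV F) \<and>
     (\<forall>F\<in>\<FF>. \<forall>G\<in>\<FF>. F \<subseteq> G \<or> G \<subseteq> F)"

definition is_pair :: "'v set set \<Rightarrow> 'v set \<Rightarrow> 'v set \<Rightarrow> bool" where
  "is_pair \<FF> F' F'' \<longleftrightarrow> F' \<in> \<FF> \<and> F'' \<in> \<FF> \<and> F' \<subset> F'' \<and>
     \<not> (\<exists>C\<in>\<FF>. F' \<subset> C \<and> C \<subset> F'')"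

definition generalized_flag :: "(complex \<Rightarrow> 'v::ab_group_add \<Rightarrow> 'v) \<Rightarrow> 'v set set \<Rightarrow> bool" where
  "generalized_flag sV \<FF> \<longleftrightarrow> is_chain sV \<FF> \<and>
     (\<forall>C\<in>\<FF>. \<exists>F' F''. is_pair \<FF> F' F'' \<and> (C = F' \<or> C = F'')) \<and>
     (\<forall>v. v \<noteq> 0 \<longrightarrow> (\<exists>F' F''. is_pair \<FF> F' F'' \<and> v \<in> F'' \<and> v \<notin> F'))"

definition semiclosed :: "('v \<Rightarrow> 'w \<Rightarrow> complex) \<Rightarrow> 'v set set \<Rightarrow> bool" where
  "semiclosed pr \<FF> \<longleftrightarrow>
     (\<forall>F' F''. is_pair \<FF> F' F'' \<longrightarrow> closureV pr F' \<in> {F', F''})"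

definition St :: "(complex \<Rightarrow> 'v::ab_group_add \<Rightarrow> 'v) \<Rightarrow> ('v \<Rightarrow> 'w \<Rightarrow> complex)
   \<Rightarrow> 'v set set \<Rightarrow> ('v \<Rightarrow> 'v) set" where
  "St sV pr \<FF> = {\<phi> \<in> gl sV pr. \<forall>F\<in>\<FF>. \<phi> ` F \<subseteq> F}"

end

theory Submission
  imports Defs
begin

lemma vs_module: "vector_space s \<Longrightarrow> module s"
  by (simp add: vector_space_def module_def)

lemma flag_chain: "generalized_flag sV \<FF> \<Longrightarrow> is_chain sV \<FF>"
  unfolding generalized_flag_def by (rule conjunct1)

lemma flag_sub:
  assumes gf: "generalized_flag sV \<FF>" and F: "F \<in> \<FF>"
  shows "module.subspace sV F"
proof -
  have "\<forall>F\<in>\<FF>. module.subspace sV F"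
    using flag_chain[OF gf] unfolding is_chain_def by (rule conjunct1)
  then show ?thesis using F by (rule bspec)
qed

lemma flag_pair:
  assumes gf: "generalized_flag sV \<FF>" and v: "v \<noteq> 0"
  shows "\<exists>F' F''. is_pair \<FF> F' F'' \<and> v \<in> F'' \<and> v \<notin> F'"
proof -
  have "\<forall>v. v \<noteq> 0 \<longrightarrow> (\<exists>F' F''. is_pair \<FF> F' F'' \<and> v \<in> F'' \<and> v \<notin> F')"
    using gf unfolding generalized_flag_def by (rule conjunct2[OF conjunct2])
  then show ?thesis using v by blast
qed

lemma comparable:
  assumes gf: "generalized_flag sV \<FF>" and F: "F \<in> \<FF>" and G: "G \<in> \<FF>"
  shows "F \<subseteq> G \<or> G \<subseteq> F"
proof -
  have "\<forall>F\<in>\<FF>. \<forall>G\<in>\<FF>. F \<subseteq> G \<or> G \<subseteq> F"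
    using flag_chain[OF gf] unfolding is_chain_def by (rule conjunct2)
  then have "\<forall>G\<in>\<FF>. F \<subseteq> G \<or> G \<subseteq> F" using F by (rule bspec)
  then show ?thesis using G by (rule bspec)
qed

lemma pair_no_between:
  assumes p: "is_pair \<FF> F' F''" and C: "C \<in> \<FF>" and a: "F' \<subset> C" and b: "C \<subset> F''"
  shows False
proof -
  have n: "\<not> (\<exists>C\<in>\<FF>. F' \<subset> C \<and> C \<subset> F'')"
    using p unfolding is_pair_def by (rule conjunct2[OF conjunct2[OF conjunct2]])
  have "\<exists>C\<in>\<FF>. F' \<subset> C \<and> C \<subset> F''" using C a b by (intro bexI[where x=C] conjI)
  with n show False by contradiction
qed

lemma chain_below:
  assumes gf: "generalized_flag sV \<FF>" and p: "is_pair \<FF> F' F''"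
    and F: "F \<in> \<FF>" and v: "v \<in> F''" and nv: "v \<notin> F"
  shows "F \<subseteq> F'"
proof (rule ccontr)
  assume a: "\<not> F \<subseteq> F'"
  have F2: "F'' \<in> \<FF>" and F1: "F' \<in> \<FF>" using p unfolding is_pair_def by auto
  have c1: "F \<subseteq> F'' \<or> F'' \<subseteq> F" using comparable[OF gf F F2] .
  have c2: "F \<subseteq> F' \<or> F' \<subseteq> F" using comparable[OF gf F F1] .
  have "F \<subseteq> F''" using c1 v nv by auto
  moreover have "F \<noteq> F''" using v nv by auto
  ultimately have "F \<subset> F''" by auto
  moreover have "F' \<subset> F" using c2 a by auto
  ultimately show False using pair_no_between[OF p F] by auto
qed

lemma pair_succ:
  assumes gf: "generalized_flag sV \<FF>" and p: "is_pair \<FF> G' G''"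
    and F: "F \<in> \<FF>" and lt: "G' \<subset> F"
  shows "G'' \<subseteq> F"
proof (rule ccontr)
  assume a: "\<not> G'' \<subseteq> F"
  have G2: "G'' \<in> \<FF>" using p unfolding is_pair_def by auto
  have "F \<subseteq> G'' \<or> G'' \<subseteq> F" using comparable[OF gf F G2] .
  then have "F \<subset> G''" using a by auto
  then show False using pair_no_between[OF p F lt] by auto
qed

lemma closure_mono: "A \<subseteq> B \<Longrightarrow> closureV pr A \<subseteq> closureV pr B"
  unfolding closureV_def perpV_def perpW_def by blast

lemma sub_closure: "A \<subseteq> closureV pr A"
  unfolding closureV_def perpV_def perpW_def by blast

lemma stepA:
  assumes vs: "vector_space sV" and gf: "generalized_flag sV \<FF>"
    and sub: "module.subspace sV W"
    and stab: "\<forall>\<phi>\<in>St sV pr \<FF>. \<phi> ` W \<subseteq> W"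
    and p: "is_pair \<FF> F' F''" and v: "v \<in> F''" "v \<notin> F'" and vW: "v \<notin> W"
  shows "W \<subseteq> closureV pr F'"
proof
  fix x assume xW: "x \<in> W"
  have m: "module sV" using vs by (rule vs_module)
  show "x \<in> closureV pr F'"
  proof (rule ccontr)
    assume "x \<notin> closureV pr F'"
    then obtain w where w: "w \<in> perpV pr F'" and c: "pr x w \<noteq> 0"
      unfolding closureV_def perpW_def by blast
    define \<phi> where "\<phi> = (\<lambda>u. sV (pr u w) v)"
    have "\<phi> \<in> gl sV pr"
      unfolding gl_def
      by (rule CollectI, rule exI[of _ "[(v,w)]"]) (simp add: \<phi>_def)
    moreover have "\<forall>F\<in>\<FF>. \<phi> ` F \<subseteq> F"
    proof (intro ballI subsetI)
      fix F y assume F: "F \<in> \<FF>" and y: "y \<in> \<phi> ` F"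
      then obtain u where u: "u \<in> F" and yu: "y = \<phi> u" by blast
      have sF: "module.subspace sV F" using flag_sub[OF gf F] .
      show "y \<in> F"
      proof (cases "v \<in> F")
        case True
        then show ?thesis using yu module.subspace_scale[OF m sF] unfolding \<phi>_def by blast
      next
        case False
        then have "F \<subseteq> F'" using chain_below[OF gf p F v(1)] by blast
        then have "pr u w = 0" using u w unfolding perpV_def by blast
        then have "y = 0" using yu module.scale_zero_left[OF m] unfolding \<phi>_def by simp
        then show ?thesis using module.subspace_0[OF m sF] by simp
      qed
    qed
    ultimately have "\<phi> \<in> St sV pr \<FF>" unfolding St_def by blast
    then have "\<phi> x \<in> W" using stab xW by blast
    then have "sV (inverse (pr x w)) (\<phi> x) \<in> W" using module.subspace_scale[OF m sub] by blast
    moreover have "sV (inverse (pr x w)) (\<phi> x) = v"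
      using c module.scale_scale[OF m] module.scale_one[OF m] unfolding \<phi>_def by simp
    ultimately show False using vW by simp
  qed
qed

lemma key:
  assumes vs: "vector_space sV" and gf: "generalized_flag sV \<FF>" and sc: "semiclosed pr \<FF>"
    and sub: "module.subspace sV W"
    and stab: "\<forall>\<phi>\<in>St sV pr \<FF>. \<phi> ` W \<subseteq> W"
    and p: "is_pair \<FF> F' F''" and y: "y \<in> W" "y \<notin> F'"
  shows "F' \<subseteq> W"
proof
  fix v assume vF: "v \<in> F'"
  show "v \<in> W"
  proof (rule ccontr)
    assume vW: "v \<notin> W"
    have m: "module sV" using vs by (rule vs_module)
    have "v \<noteq> 0" using vW module.subspace_0[OF m sub] by blast
    then obtain G' G'' where q: "is_pair \<FF> G' G''" and vG: "v \<in> G''" "v \<notin> G'"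
      using flag_pair[OF gf] by blast
    have F'in: "F' \<in> \<FF>" using p unfolding is_pair_def by blast
    have G1: "G' \<in> \<FF>" using q unfolding is_pair_def by blast
    have "G' \<subseteq> F' \<or> F' \<subseteq> G'" using comparable[OF gf G1 F'in] .
    then have "G' \<subset> F'" using vF vG by blast
    then have "G'' \<subseteq> F'" using pair_succ[OF gf q F'in] by blast
    moreover have "closureV pr G' \<in> {G', G''}" using sc q unfolding semiclosed_def by blast
    moreover have "W \<subseteq> closureV pr G'" using stepA[OF vs gf sub stab q vG vW] .
    ultimately have "W \<subseteq> F'" using \<open>G' \<subset> F'\<close> by blast
    then show False using y by blast
  qed
qed

theorem lemma3p1:
  fixes sV :: "complex \<Rightarrow> 'v::ab_group_add \<Rightarrow> 'v"
    and sW :: "complex \<Rightarrow> 'w::ab_group_add \<Rightarrow> 'w"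
    and pr :: "'v \<Rightarrow> 'w \<Rightarrow> complex"
    and \<FF> :: "'v set set"
    and W :: "'v set"
  assumes "vector_space sV" and "vector_space sW"
    and "countable_dim sV" and "countable_dim sW"
    and "bilinear_pairing sV sW pr" and "nondegenerate pr"
    and "generalized_flag sV \<FF>" and "semiclosed pr \<FF>"
    and "module.subspace sV W" and "closedV pr W"
    and "W \<noteq> {0}" and "W \<noteq> UNIV"
    and "\<forall>\<phi>\<in>St sV pr \<FF>. \<phi> ` W \<subseteq> W"
  shows "(\<exists>S\<subseteq>\<FF>. W = \<Union>S) \<and> (\<exists>T\<subseteq>\<FF>. W = \<Inter>T)"
proof -
  note vs = assms(1) and gf = assms(7) and sc = assms(8) and sub = assms(9)
    and cl = assms(10) and stab = assms(13)
  have m: "module sV" using vs by (rule vs_module)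
  have clW: "closureV pr W = W" using cl unfolding closedV_def by simp
  have U: "\<exists>F\<in>\<FF>. y \<in> F \<and> F \<subseteq> W" if y: "y \<in> W" "y \<noteq> 0" for y
  proof -
    obtain F' F'' where p: "is_pair \<FF> F' F''" and yF: "y \<in> F''" "y \<notin> F'"
      using flag_pair[OF gf y(2)] by blast
    have F'W: "F' \<subseteq> W" using key[OF vs gf sc sub stab p y(1) yF(2)] .
    have "closureV pr F' \<in> {F', F''}" using sc p unfolding semiclosed_def by blast
    then have "F'' \<subseteq> W"
    proof
      assume e: "closureV pr F' = F'"
      show ?thesis
      proof
        fix v assume v: "v \<in> F''"
        show "v \<in> W"
        proof (rule ccontr)
          assume vW: "v \<notin> W"
          then have "v \<notin> F'" using F'W by blast
          then have "W \<subseteq> F'" using stepA[OF vs gf sub stab p v _ vW] e by simp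
          then show False using y yF by blast
        qed
      qed
    next
      assume "closureV pr F' \<in> {F''}"
      then have e: "closureV pr F' = F''" by simp
      show ?thesis using closure_mono[OF F'W, of pr] clW e by simp
    qed
    then show ?thesis using p yF unfolding is_pair_def by blast
  qed
  obtain y0 where y0: "y0 \<in> W" "y0 \<noteq> 0" using assms(11) module.subspace_0[OF m sub] by blast
  have part1: "W = \<Union>{F\<in>\<FF>. F \<subseteq> W}"
  proof
    show "W \<subseteq> \<Union>{F\<in>\<FF>. F \<subseteq> W}"
    proof
      fix y assume y: "y \<in> W"
      show "y \<in> \<Union>{F\<in>\<FF>. F \<subseteq> W}"
      proof (cases "y = 0")
        case True
        obtain F where "F \<in> \<FF>" "F \<subseteq> W" using U[OF y0] by blast
        moreover have "module.subspace sV F" using flag_sub[OF gf \<open>F \<in> \<FF>\<close>] .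
        ultimately have "y \<in> F" using True module.subspace_0[OF m] by simp
        then show ?thesis using \<open>F \<in> \<FF>\<close> \<open>F \<subseteq> W\<close> by blast
      next
        case False
        then show ?thesis using U[OF y] by blast
      qed
    qed
  next
    show "\<Union>{F\<in>\<FF>. F \<subseteq> W} \<subseteq> W" by blast
  qed
  have part2: "W = \<Inter>{F\<in>\<FF>. W \<subseteq> F}"
  proof
    show "\<Inter>{F\<in>\<FF>. W \<subseteq> F} \<subseteq> W"
    proof
      fix u assume u: "u \<in> \<Inter>{F\<in>\<FF>. W \<subseteq> F}"
      show "u \<in> W"
      proof (rule ccontr)
        assume uW: "u \<notin> W"
        then have "u \<noteq> 0" using module.subspace_0[OF m sub] by blast
        then obtain F' F'' where p: "is_pair \<FF> F' F''" and uF: "u \<in> F''" "u \<notin> F'"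
          using flag_pair[OF gf] by blast
        have F'in: "F' \<in> \<FF>" using p unfolding is_pair_def by blast
        have WF: "W \<subseteq> closureV pr F'" using stepA[OF vs gf sub stab p uF uW] .
        show False
        proof (cases "W \<subseteq> F'")
          case True
          have "F' \<in> {F\<in>\<FF>. W \<subseteq> F}" using True F'in by simp
          with u have "u \<in> F'" by (rule InterD)
          then show False using uF by auto
        next
          case False
          then obtain y where y: "y \<in> W" "y \<notin> F'" by blast
          have F'W: "F' \<subseteq> W" using key[OF vs gf sc sub stab p y] .
          have "closureV pr F' \<subseteq> W" using closure_mono[OF F'W, of pr] clW by simp
          have "closureV pr F' \<in> {F', F''}" using sc p unfolding semiclosed_def by blast
          then have "closureV pr F' = F' \<or> closureV pr F' = F''" by simp
          then show False
          proof
            assume "closureV pr F' = F'"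
            then show False using WF y by auto
          next
            assume "closureV pr F' = F''"
            then show False using \<open>closureV pr F' \<subseteq> W\<close> uF uW by auto
          qed
        qed
      qed
    qed
  next
    show "W \<subseteq> \<Inter>{F\<in>\<FF>. W \<subseteq> F}" by blast
  qed
  have s1: "{F\<in>\<FF>. F \<subseteq> W} \<subseteq> \<FF>" by blast
  have s2: "{F\<in>\<FF>. W \<subseteq> F} \<subseteq> \<FF>" by blast
  show ?thesis
  proof
    have "{F\<in>\<FF>. F \<subseteq> W} \<subseteq> \<FF> \<and> W = \<Union>{F\<in>\<FF>. F \<subseteq> W}" using s1 part1 by (rule conjI)
    then show "\<exists>S\<subseteq>\<FF>. W = \<Union>S" ..
    have "{F\<in>\<FF>. W \<subseteq> F} \<subseteq> \<FF> \<and> W = \<Inter>{F\<in>\<FF>. W \<subseteq> F}" using s2 part2 by (rule conjI)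
    then show "\<exists>T\<subseteq>\<FF>. W = \<Inter>T" ..
  qed
qed

end
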